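(* Let $\mathbf i=(i_1,\dots,i_N)$ be a reduced expression of $w_0$ whose standard seed satisfies properties (A), (B) and (C). Let $l\in\{1,\dots,N\}$ and assume there exists $m\in\{1,\dots,N\}$ with $i_l\cdot i_m=-1$ and $m_-(\mathbf i)<l<m<l_+(\mathbf i)<m_+(\mathbf i)$. Then $P_l$ divides $\tilde P_l:=\beta_lP_{\mathrm{in}(l)}$.
   Context: $\mathfrak g$ is a complex simple Lie algebra of simply-laced type, vertex set $I=\{1,\dots,n\}$, Cartan entries $i\cdot j$, Weyl group with simple reflections $s_i$, longest element $w_0$, $N=\ell(w_0)$, fundamental weights $\omega_i$. $\overline D:\mathbb C[\mathsf N]\to\mathbb C(\alpha_1,\dots,\alpha_n)$ is the algebra morphism $\overline D(f)=\sum_{\mathbf j}(f,e_{j_1}\cdots e_{j_r})\big(\alpha_{j_1}(\alpha_{j_1}+\alpha_{j_2})\cdots(\alpha_{j_1}+\dots+\alpha_{j_r})\big)^{-1}$ ($\mathbb C[\mathsf N]$ identified with the graded dual of $U(\mathfrak n)$, $e_i$ Chevalley generators, $\alpha_i$ indeterminates). Positive roots are linear forms in the $\alpha_i$; $(\beta;P)$ = multiplicity of $\beta$ in $P$. For a reduced expression $\mathbf i$: $\beta_j=s_{i_1}\cdots s_{i_{j-1}}(\alpha_{i_j})$; $j_-(\mathbf i)=\max(\{l<j:i_l=i_j\}\cup\{0\})$; $j_+(\mathbf i)=\min(\{l>j:i_l=i_j\}\cup\{N+1\})$; $J_{ex}(\mathbf i)=\{j:j_+\le N\}$; flag minors $x_j=D(s_{i_1}\cdots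 s_{i_j}\omega_{i_j},\omega_{i_j})$. The quiver $Q^{\mathbf i}$ on $\{1,\dots,N\}$ has an ordinary arrow $u\to v$ iff $i_u\cdot i_v=-1$ and $u<v<u_+<v_+$, and a horizontal arrow $u_+\to u$ for each $u\in J_{ex}$. For $j\in J_{ex}$, $\mathrm{inord}(j)$ is the set of sources of ordinary arrows into $j$ and $P_{\mathrm{in}(j)}:=P_{j_+}\prod_{l\in\mathrm{inord}(j)}P_l$. Properties: (A) $\overline D(x_j)=1/P_j$ with $P_j$ a product of positive roots, all $j$; (B) $P_jP_{j_-}=\beta_j\prod_{l<j<l_+,\,i_l\cdot i_j=-1}P_l$ for all $j$, with $P_0=1$; (C) $(\beta_i;P_j)-(\beta_i;P_{j_+})\le1$ for all $j\in J_{ex}$, $1\le i\le N$. *)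

theory Defs
  imports Complex_Main
begin

text \<open>Root-lattice vectors: coordinates w.r.t. the simple roots alpha_1..alpha_n,
  as functions nat \<Rightarrow> int (zero outside 1..n). A positive root is such a vector,
  viewed as the linear form sum_k v k * alpha_k.
  A product of positive roots (a monomial in positive roots) is represented by its
  multiplicity function: root \<Rightarrow> int (the exponent of that root), so that
  products become sums and (beta; P) is P beta.\<close>

type_synonym vec = "nat \<Rightarrow> int"
type_synonym rootprod = "vec \<Rightarrow> int"

definition simply_laced_cartan :: "nat \<Rightarrow> (nat \<Rightarrow> nat \<Rightarrow> int) \<Rightarrow> bool" where
  "simply_laced_cartan n C \<longleftrightarrow>
     n \<ge> 1 \<and>
     (\<forall>i\<in>{1..n}. C i i = 2) \<and>
     (\<forall>i\<in>{1..n}. \<forall>j\<in>{1..n}. i \<noteq> j \<longrightarrow> C i j = C j i \<and> (C i j = 0 \<or> C i j = -1)) \<and>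
     (\<forall>x :: nat \<Rightarrow> real. (\<exists>i\<in>{1..n}. x i \<noteq> 0) \<longrightarrow>
        (\<Sum>i\<in>{1..n}. \<Sum>j\<in>{1..n}. x i * of_int (C i j) * x j) > 0) \<and>
     (\<forall>i\<in>{1..n}. \<forall>j\<in>{1..n}.
        (\<lambda>a b. a \<in> {1..n} \<and> b \<in> {1..n} \<and> C a b = -1)\<^sup>*\<^sup>* i j)"

definition simple_root :: "nat \<Rightarrow> vec" where
  "simple_root i = (\<lambda>k. if k = i then 1 else 0)"

definition sref :: "nat \<Rightarrow> (nat \<Rightarrow> nat \<Rightarrow> int) \<Rightarrow> nat \<Rightarrow> vec \<Rightarrow> vec" where
  "sref n C i v = v(i := v i - (\<Sum>k\<in>{1..n}. v k * C k i))"

definition word_act :: "nat \<Rightarrow> (nat \<Rightarrow> nat \<Rightarrow> int) \<Rightarrow> nat list \<Rightarrow> vec \<Rightarrow> vec" where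
  "word_act n C ws = foldr (\<lambda>a f. sref n C a \<circ> f) ws id"

definition is_word :: "nat \<Rightarrow> nat list \<Rightarrow> bool" where
  "is_word n ws \<longleftrightarrow> set ws \<subseteq> {1..n}"

definition reduced_word :: "nat \<Rightarrow> (nat \<Rightarrow> nat \<Rightarrow> int) \<Rightarrow> nat list \<Rightarrow> bool" where
  "reduced_word n C ws \<longleftrightarrow> is_word n ws \<and>
     (\<forall>ws'. is_word n ws' \<and> word_act n C ws' = word_act n C ws \<longrightarrow> length ws \<le> length ws')"

definition reduced_expr_w0 :: "nat \<Rightarrow> (nat \<Rightarrow> nat \<Rightarrow> int) \<Rightarrow> nat list \<Rightarrow> bool" where
  "reduced_expr_w0 n C ws \<longleftrightarrow> reduced_word n C ws \<and>
     (\<forall>ws'. reduced_word n C ws' \<longrightarrow> length ws' \<le> length ws)"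

definition roots :: "nat \<Rightarrow> (nat \<Rightarrow> nat \<Rightarrow> int) \<Rightarrow> vec set" where
  "roots n C = {word_act n C ws (simple_root i) | ws i. is_word n ws \<and> i \<in> {1..n}}"

definition pos_roots :: "nat \<Rightarrow> (nat \<Rightarrow> nat \<Rightarrow> int) \<Rightarrow> vec set" where
  "pos_roots n C = {r \<in> roots n C. \<forall>k. r k \<ge> 0}"

text \<open>1-based letter i_k of the word.\<close>
definition ix :: "nat list \<Rightarrow> nat \<Rightarrow> nat" where
  "ix ws k = ws ! (k - 1)"

definition beta :: "nat \<Rightarrow> (nat \<Rightarrow> nat \<Rightarrow> int) \<Rightarrow> nat list \<Rightarrow> nat \<Rightarrow> vec" where
  "beta n C ws j = word_act n C (take (j - 1) ws) (simple_root (ix ws j))"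

definition jminus :: "nat list \<Rightarrow> nat \<Rightarrow> nat" where
  "jminus ws j = Max ({l. 1 \<le> l \<and> l < j \<and> ix ws l = ix ws j} \<union> {0})"

definition jplus :: "nat list \<Rightarrow> nat \<Rightarrow> nat" where
  "jplus ws j = Min ({l. j < l \<and> l \<le> length ws \<and> ix ws l = ix ws j} \<union> {length ws + 1})"

definition J_ex :: "nat list \<Rightarrow> nat set" where
  "J_ex ws = {j \<in> {1..length ws}. jplus ws j \<le> length ws}"

definition ord_arrow :: "(nat \<Rightarrow> nat \<Rightarrow> int) \<Rightarrow> nat list \<Rightarrow> nat \<Rightarrow> nat \<Rightarrow> bool" where
  "ord_arrow C ws u v \<longleftrightarrow> u \<in> {1..length ws} \<and> v \<in> {1..length ws} \<and>
     C (ix ws u) (ix ws v) = -1 \<and> u < v \<and> v < jplus ws u \<and> jplus ws u < jplus ws v"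

definition inord :: "(nat \<Rightarrow> nat \<Rightarrow> int) \<Rightarrow> nat list \<Rightarrow> nat \<Rightarrow> nat set" where
  "inord C ws j = {l. ord_arrow C ws l j}"

definition P_in :: "(nat \<Rightarrow> nat \<Rightarrow> int) \<Rightarrow> nat list \<Rightarrow> (nat \<Rightarrow> rootprod) \<Rightarrow> nat \<Rightarrow> rootprod" where
  "P_in C ws P j = (\<lambda>r. P (jplus ws j) r + (\<Sum>l\<in>inord C ws j. P l r))"

definition single :: "vec \<Rightarrow> rootprod" where
  "single b = (\<lambda>r. if r = b then 1 else 0)"

end

theory Submission
  imports Defs
begin

lemma jminus_fin: "finite ({l. 1 \<le> l \<and> l < j \<and> ix ws l = ix ws j} \<union> {0::nat})"
  by (rule finite_subset[of _ "{0..<j} \<union> {0}"]) auto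

lemma jminus_cases:
  "jminus ws j = 0 \<or> (1 \<le> jminus ws j \<and> jminus ws j < j \<and> ix ws (jminus ws j) = ix ws j)"
proof -
  have "jminus ws j \<in> {l. 1 \<le> l \<and> l < j \<and> ix ws l = ix ws j} \<union> {0}"
    unfolding jminus_def by (rule Max_in[OF jminus_fin]) auto
  then show ?thesis by auto
qed

lemma jminus_ge: "1 \<le> k \<Longrightarrow> k < j \<Longrightarrow> ix ws k = ix ws j \<Longrightarrow> k \<le> jminus ws j"
  unfolding jminus_def by (rule Max_ge[OF jminus_fin]) auto

lemma jplus_fin: "finite ({l. j < l \<and> l \<le> length ws \<and> ix ws l = ix ws j} \<union> {length ws + 1})"
  by (rule finite_subset[of _ "{0..length ws + 1}"]) auto

lemma jplus_cases:
  "jplus ws j = length ws + 1 \<or> (j < jplus ws j \<and> jplus ws j \<le> length ws \<and> ix ws (jplus ws j) = ix ws j)"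
proof -
  have "jplus ws j \<in> {l. j < l \<and> l \<le> length ws \<and> ix ws l = ix ws j} \<union> {length ws + 1}"
    unfolding jplus_def by (rule Min_in[OF jplus_fin]) auto
  then show ?thesis by auto
qed

lemma jplus_le: "j < k \<Longrightarrow> k \<le> length ws \<Longrightarrow> ix ws k = ix ws j \<Longrightarrow> jplus ws j \<le> k"
  unfolding jplus_def by (rule Min_le[OF jplus_fin]) auto

lemma jplus_le_N: "jplus ws j \<le> length ws + 1"
  unfolding jplus_def by (rule Min_le[OF jplus_fin]) auto

lemma P_zero:
  fixes P :: "nat \<Rightarrow> rootprod"
  assumes P0: "P 0 = (\<lambda>_. 0)"
    and B: "\<forall>j\<in>{1..length ws}. \<forall>r.
              P j r + P (jminus ws j) r =
              single (beta n C ws j) r +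
              (\<Sum>k\<in>{k. 1 \<le> k \<and> k < j \<and> j < jplus ws k \<and> C (ix ws k) (ix ws j) = -1}. P k r)"
    and nb: "\<forall>i\<in>{1..length ws}. r \<noteq> beta n C ws i"
  shows "j \<in> {1..length ws} \<Longrightarrow> P j r = 0"
proof (induction j rule: less_induct)
  case (less j)
  have s: "single (beta n C ws j) r = 0" using nb less.prems by (auto simp: single_def)
  have sum0: "(\<Sum>k\<in>{k. 1 \<le> k \<and> k < j \<and> j < jplus ws k \<and> C (ix ws k) (ix ws j) = -1}. P k r) = 0"
    by (rule sum.neutral) (use less in auto)
  have jm: "P (jminus ws j) r = 0"
    using jminus_cases[of ws j] less P0 by fastforce
  have "P j r + P (jminus ws j) r =
              single (beta n C ws j) r +
              (\<Sum>k\<in>{k. 1 \<le> k \<and> k < j \<and> j < jplus ws k \<and> C (ix ws k) (ix ws j) = -1}. P k r)"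
    using B less.prems by blast
  then show ?case using s sum0 jm by simp
qed


theorem proposition6p6:
  fixes n :: nat and C :: "nat \<Rightarrow> nat \<Rightarrow> int" and ws :: "nat list"
    and P :: "nat \<Rightarrow> rootprod" and l m :: nat
  assumes cartan: "simply_laced_cartan n C"
    and red: "reduced_expr_w0 n C ws"
    and P0: "P 0 = (\<lambda>_. 0)"
    and A: "\<forall>j\<in>{1..length ws}. \<forall>r. 0 \<le> P j r \<and> (P j r \<noteq> 0 \<longrightarrow> r \<in> pos_roots n C)"
    and B: "\<forall>j\<in>{1..length ws}. \<forall>r.
              P j r + P (jminus ws j) r =
              single (beta n C ws j) r +
              (\<Sum>k\<in>{k. 1 \<le> k \<and> k < j \<and> j < jplus ws k \<and> C (ix ws k) (ix ws j) = -1}. P k r)"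
    and Cc: "\<forall>j\<in>J_ex ws. \<forall>i\<in>{1..length ws}.
              P j (beta n C ws i) - P (jplus ws j) (beta n C ws i) \<le> 1"
    and l: "l \<in> {1..length ws}" and m: "m \<in> {1..length ws}"
    and lm: "C (ix ws l) (ix ws m) = -1"
    and ord: "jminus ws m < l" "l < m" "m < jplus ws l" "jplus ws l < jplus ws m"
  shows "\<forall>r. P l r \<le> single (beta n C ws l) r + P_in C ws P l r"

proof
  fix r
  let ?N = "length ws"
  have sym: "\<forall>i\<in>{1..n}. \<forall>j\<in>{1..n}. i \<noteq> j \<longrightarrow> C i j = C j i"
    and Cii: "\<forall>i\<in>{1..n}. C i i = 2"
    using cartan unfolding simply_laced_cartan_def by blast+
  have wd: "set ws \<subseteq> {1..n}"
    using red unfolding reduced_expr_w0_def reduced_word_def is_word_def by blast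
  have ixr: "ix ws k \<in> {1..n}" if "k \<in> {1..?N}" for k
  proof -
    have "ws ! (k - 1) \<in> set ws" using that by auto
    then show ?thesis using wd unfolding ix_def by blast
  qed
  have nn: "0 \<le> P j r" if "j \<in> {1..?N}" for j using A that by blast
  have ne_adj: "ix ws a \<noteq> ix ws b" if "a \<in> {1..?N}" "C (ix ws a) (ix ws b) = -1" for a b
    using that Cii ixr by force
  have lmsym: "C (ix ws m) (ix ws l) = -1"
    using sym ixr[OF l] ixr[OF m] lm ne_adj[OF l lm] by metis
  have lpN: "jplus ws l \<le> ?N" using ord(4) jplus_le_N[of ws m] by simp
  have lp: "l < jplus ws l" "ix ws (jplus ws l) = ix ws l"
    using jplus_cases[of ws l] lpN by auto
  have lpr: "jplus ws l \<in> {1..?N}" using lp lpN by auto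
  have lJ: "l \<in> J_ex ws" using l lpN unfolding J_ex_def by auto
  have jml: "jminus ws (jplus ws l) = l"
  proof (rule antisym)
    show "l \<le> jminus ws (jplus ws l)" using jminus_ge[of l "jplus ws l" ws] l lp by auto
  next
    show "jminus ws (jplus ws l) \<le> l"
    proof (rule ccontr)
      assume c: "\<not> jminus ws (jplus ws l) \<le> l"
      then have "1 \<le> jminus ws (jplus ws l) \<and> jminus ws (jplus ws l) < jplus ws l \<and>
          ix ws (jminus ws (jplus ws l)) = ix ws (jplus ws l)"
        using jminus_cases[of ws "jplus ws l"] by auto
      then have "jplus ws l \<le> jminus ws (jplus ws l)"
        using jplus_le[of l "jminus ws (jplus ws l)" ws] c lp lpN by auto
      then show False using \<open>1 \<le> jminus ws (jplus ws l) \<and> jminus ws (jplus ws l) < jplus ws l \<and> _\<close> by simp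
    qed
  qed
  define Km where "Km = {k. 1 \<le> k \<and> k < m \<and> m < jplus ws k \<and> C (ix ws k) (ix ws m) = -1}"
  define Kl where "Kl = {k. 1 \<le> k \<and> k < l \<and> l < jplus ws k \<and> C (ix ws k) (ix ws l) = -1}"
  define Kp where "Kp = {k. 1 \<le> k \<and> k < jplus ws l \<and> jplus ws l < jplus ws k \<and> C (ix ws k) (ix ws (jplus ws l)) = -1}"
  define I where "I = inord C ws l"
  have finKm: "finite Km" unfolding Km_def by (rule finite_subset[of _ "{1..m}"]) auto
  have finKl: "finite Kl" unfolding Kl_def by (rule finite_subset[of _ "{1..l}"]) auto
  have finKp: "finite Kp" unfolding Kp_def by (rule finite_subset[of _ "{1..jplus ws l}"]) auto
  have Kmr: "Km \<subseteq> {1..?N}" unfolding Km_def using m by auto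
  have Klr: "Kl \<subseteq> {1..?N}" unfolding Kl_def using l by auto
  have Kpr: "Kp \<subseteq> {1..?N}" unfolding Kp_def using lpN by auto
  have IKl: "I \<subseteq> Kl" unfolding I_def inord_def ord_arrow_def Kl_def by auto
  have finI: "finite I" using finite_subset[OF IKl finKl] .
  have Ir: "I \<subseteq> {1..?N}" using IKl Klr by blast
  have sI: "0 \<le> (\<Sum>k\<in>I. P k r)" by (rule sum_nonneg) (use Ir nn in blast)
  have Pin: "P_in C ws P l r = P (jplus ws l) r + (\<Sum>k\<in>I. P k r)"
    unfolding P_in_def I_def by simp
  have sing0: "\<And>b. 0 \<le> single b r" unfolding single_def by simp
  have Bm: "P m r + P (jminus ws m) r = single (beta n C ws m) r + (\<Sum>k\<in>Km. P k r)"
    using B m unfolding Km_def by blast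
  have lKm: "l \<in> Km" unfolding Km_def using l ord lm by auto
  have sKm: "P l r \<le> (\<Sum>k\<in>Km. P k r)"
    by (rule member_le_sum[OF lKm _ finKm]) (use Kmr nn in blast)
  have mm: "P (jminus ws m) r \<le> (\<Sum>k\<in>I. P k r)"
  proof (cases "jminus ws m = 0")
    case True then show ?thesis using P0 sI by simp
  next
    case False
    define q where "q = jminus ws m"
    have q: "1 \<le> q" "q < m" "ix ws q = ix ws m" using jminus_cases[of ws m] False q_def by auto
    have q1: "jplus ws q \<le> m" using jplus_le[of q m ws] q m by auto
    have q2: "l < jplus ws q"
    proof (cases "jplus ws q = ?N + 1")
      case True then show ?thesis using l by auto
    next
      case False
      then have qq: "q < jplus ws q" "jplus ws q \<le> ?N" "ix ws (jplus ws q) = ix ws q"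
        using jplus_cases[of ws q] by auto
      show ?thesis
      proof (rule ccontr)
        assume "\<not> l < jplus ws q"
        then have "jplus ws q \<le> q" using jminus_ge[of "jplus ws q" m ws] qq q ord q_def by auto
        then show False using qq by simp
      qed
    qed
    have "q \<in> I" unfolding I_def inord_def ord_arrow_def
      using q q1 q2 l m ord lmsym q_def by auto
    then have "P q r \<le> (\<Sum>k\<in>I. P k r)"
      by (rule member_le_sum[OF _ _ finI]) (use Ir nn in blast)
    then show ?thesis using q_def by simp
  qed
  have Bl: "P l r + P (jminus ws l) r = single (beta n C ws l) r + (\<Sum>k\<in>Kl. P k r)"
    using B l unfolding Kl_def by blast
  have splitKl: "(\<Sum>k\<in>Kl. P k r) = (\<Sum>k\<in>Kl - I. P k r) + (\<Sum>k\<in>I. P k r)"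
    by (rule sum.subset_diff[OF IKl finKl])
  have lm0: "0 \<le> P (jminus ws l) r"
    using jminus_cases[of ws l] P0 nn l by fastforce
  have Bp: "P (jplus ws l) r + P l r = single (beta n C ws (jplus ws l)) r + (\<Sum>k\<in>Kp. P k r)"
  proof -
    have "P (jplus ws l) r + P (jminus ws (jplus ws l)) r = single (beta n C ws (jplus ws l)) r + (\<Sum>k\<in>Kp. P k r)"
      using B lpr unfolding Kp_def by blast
    then show ?thesis using jml by simp
  qed
  have sub: "insert m (Kl - I) \<subseteq> Kp"
  proof
    fix k assume k: "k \<in> insert m (Kl - I)"
    show "k \<in> Kp"
    proof (cases "k = m")
      case True then show ?thesis unfolding Kp_def using m ord lp lmsym by auto
    next
      case False
      then have k1: "k \<in> Kl" "k \<notin> I" using k by auto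
      then have kk: "1 \<le> k" "k < l" "l < jplus ws k" "C (ix ws k) (ix ws l) = -1"
        unfolding Kl_def by auto
      have "\<not> jplus ws k < jplus ws l" using k1(2) kk l unfolding I_def inord_def ord_arrow_def by auto
      moreover have "jplus ws k \<noteq> jplus ws l"
      proof
        assume e: "jplus ws k = jplus ws l"
        then have "ix ws (jplus ws k) = ix ws k" using jplus_cases[of ws k] lpN by auto
        then have "ix ws k = ix ws l" using e lp by simp
        then show False using ne_adj[of k l] kk l by auto
      qed
      ultimately show ?thesis unfolding Kp_def using kk lp by auto
    qed
  qed
  have mnot: "m \<notin> Kl - I" unfolding Kl_def using ord by auto
  have sKp: "P m r + (\<Sum>k\<in>Kl - I. P k r) \<le> (\<Sum>k\<in>Kp. P k r)"
  proof -
    have "(\<Sum>k\<in>insert m (Kl - I). P k r) \<le> (\<Sum>k\<in>Kp. P k r)"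
      by (rule sum_mono2[OF finKp sub]) (use Kpr nn in blast)
    moreover have "(\<Sum>k\<in>insert m (Kl - I). P k r) = P m r + (\<Sum>k\<in>Kl - I. P k r)"
      using finKl mnot by simp
    ultimately show ?thesis by simp
  qed
  have key: "P l r \<le> P (jplus ws l) r + single (beta n C ws l) r + 2 * (\<Sum>k\<in>I. P k r)"
    using Bm sKm mm Bl splitKl lm0 Bp sKp sing0[of "beta n C ws m"]
      sing0[of "beta n C ws (jplus ws l)"] by linarith
  have plp: "0 \<le> P (jplus ws l) r" using nn lpr by blast
  show "P l r \<le> single (beta n C ws l) r + P_in C ws P l r"
  proof (cases "\<exists>i\<in>{1..?N}. r = beta n C ws i")
    case True
    then obtain i where i: "i \<in> {1..?N}" "r = beta n C ws i" by blast
    have c: "P l r - P (jplus ws l) r \<le> 1" using Cc lJ i by blast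
    show ?thesis
    proof (cases "single (beta n C ws l) r + (\<Sum>k\<in>I. P k r) = 0")
      case True
      then have "single (beta n C ws l) r = 0" "(\<Sum>k\<in>I. P k r) = 0"
        using sI sing0[of "beta n C ws l"] by linarith+
      then show ?thesis using key Pin by simp
    next
      case False
      then show ?thesis using c Pin sI sing0[of "beta n C ws l"] by linarith
    qed
  next
    case False
    then have "P l r = 0" using P_zero[OF P0 B, of r l] l by blast
    then show ?thesis using Pin plp sI sing0[of "beta n C ws l"] by linarith
  qed
qed
end
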